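(* Let $T:\mathbb{R}^n\to\mathbb{R}^n$ be an averaged operator with $\mathrm{Fix}(T)\neq\emptyset$ and $\lim_{\|x\|\to\infty}\|x-T(x)\|=\infty$. Let $\{x^k\}$ be generated by the Safe-L2O method (described in the context) with $\alpha\in(0,1)$, where the safeguard sequence $\{\mu_k\}$ is updated by any one of the five schemes GS($\theta$), RT, AA, EMA($\theta$), RM($m$) defined in the context (with $\theta\in(0,1)$, $m\in\mathbb{N}$). Then: if the inequality $\|y^k-T(y^k)\|\le\alpha\mu_k$ holds for infinitely many $k$, we have $\mu_k\to0$. Consequently $\lim_{k\to\infty}d_{\mathrm{Fix}(T)}(x^k)=0$, and if $\{x^k\}$ has exactly one cluster point then $\{x^k\}$ converges to a point of $\mathrm{Fix}(T)$.
   Context: $\|\cdot\|$ is the Euclidean norm; $\mathrm{Fix}(T):=\{x:T(x)=x\}$; $d_C(x):=\inf\{\|x-y\|:y\in C\}$. $T$ is averaged if $T=(1-\lambda)\mathrm{Id}+\lambda Q$ with $\lambda\in(0,1)$ and $Q$ 1-Lipschitz. Safe-L2O method: fix maps $\mathcal{L}_k:\mathbb{R}^n\to\mathbb{R}^n$, the fallback operator $T$, $\alpha\in(0,1)$, $x^1\in\mathbb{R}^n$; set $\mu_1:=\|x^1-T(x^1)\|$. For $k=1,2,\dots$: $y^k:=\mathcal{L}_k(x^k)$; if $\|y^k-T(y^k)\|\le\alpha\mu_k$ set $x^{k+1}:=y^k$, else $x^{k+1}:=T(x^k)$; then compute $\mu_{k+1}$ by the chosen scheme. Write $r_j:=\|x^j-T(x^j)\|$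 and say that "sufficient descent occurs at step $k$" if $r_{k+1}\le\alpha\mu_k$. The schemes (in each, $\mu_{k+1}:=\mu_k$ whenever sufficient descent does not occur at step $k$): GS($\theta$): if sufficient descent occurs at step $k$, $\mu_{k+1}:=\theta\mu_k$. RT: if sufficient descent occurs at step $k$, $\mu_{k+1}:=r_{k+1}$. AA: with a counter $m_1:=0$; if sufficient descent occurs at step $k$, $\mu_{k+1}:=\frac{1}{m_k+1}(r_{k+1}+m_k\mu_k)$ and $m_{k+1}:=m_k+1$; otherwise $m_{k+1}:=m_k$. EMA($\theta$): if sufficient descent occurs at step $k$, $\mu_{k+1}:=\theta r_{k+1}+(1-\theta)\mu_k$. RM($m$): if sufficient descent occurs at step $k$, $\mu_{k+1}:=\max_{j\in\Xi_k} r_{j+1}$, where $\Xi_k$ is the set of the most recent $m$ indices $j\le k$ at which sufficient descent occurred (all such indices if there are fewer than $m$). *)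

theory Defs
  imports "HOL-Analysis.Analysis"
begin

definition Fix :: "('a \<Rightarrow> 'a) \<Rightarrow> 'a set" where
  "Fix T = {x. T x = x}"

definition averaged :: "('a::real_normed_vector \<Rightarrow> 'a) \<Rightarrow> bool" where
  "averaged T \<longleftrightarrow> (\<exists>lam Q. 0 < lam \<and> lam < 1 \<and>
      (\<forall>u v. norm (Q u - Q v) \<le> norm (u - v)) \<and>
      (\<forall>u. T u = (1 - lam) *\<^sub>R u + lam *\<^sub>R Q u))"

datatype scheme = GS real | RT | AA | EMA real | RM nat

definition valid_scheme :: "scheme \<Rightarrow> bool" where
  "valid_scheme s = (case s of
      GS \<theta> \<Rightarrow> 0 < \<theta> \<and> \<theta> < 1
    | EMA \<theta> \<Rightarrow> 0 < \<theta> \<and> \<theta> < 1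
    | RM m \<Rightarrow> 1 \<le> m
    | _ \<Rightarrow> True)"

definition res :: "('a::real_normed_vector \<Rightarrow> 'a) \<Rightarrow> 'a \<Rightarrow> real" where
  "res T v = norm (v - T v)"

definition suff_desc :: "('a::real_normed_vector \<Rightarrow> 'a) \<Rightarrow> real \<Rightarrow> (nat \<Rightarrow> 'a) \<Rightarrow> (nat \<Rightarrow> real) \<Rightarrow> nat \<Rightarrow> bool" where
  "suff_desc T \<alpha> x \<mu> k \<longleftrightarrow> res T (x (Suc k)) \<le> \<alpha> * \<mu> k"

definition desc_set :: "('a::real_normed_vector \<Rightarrow> 'a) \<Rightarrow> real \<Rightarrow> (nat \<Rightarrow> 'a) \<Rightarrow> (nat \<Rightarrow> real) \<Rightarrow> nat \<Rightarrow> nat set" where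
  "desc_set T \<alpha> x \<mu> k = {j. 1 \<le> j \<and> j \<le> k \<and> suff_desc T \<alpha> x \<mu> j}"

text \<open>The most recent m elements of a (finite) index set S (all of them if fewer than m).\<close>
definition recent :: "nat \<Rightarrow> nat set \<Rightarrow> nat set" where
  "recent m S = {j \<in> S. card {i \<in> S. j \<le> i} \<le> m}"

text \<open>mu_{k+1} computed from the scheme. For AA, the counter m_k equals the number of
  indices 1 <= j < k at which sufficient descent occurred (m_1 = 0, incremented exactly at
  sufficient-descent steps).\<close>
definition next_mu :: "scheme \<Rightarrow> ('a::real_normed_vector \<Rightarrow> 'a) \<Rightarrow> real \<Rightarrow> (nat \<Rightarrow> 'a) \<Rightarrow> (nat \<Rightarrow> real) \<Rightarrow> nat \<Rightarrow> real" where
  "next_mu s T \<alpha> x \<mu> k =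
    (if suff_desc T \<alpha> x \<mu> k then
       (case s of
          GS \<theta> \<Rightarrow> \<theta> * \<mu> k
        | RT \<Rightarrow> res T (x (Suc k))
        | AA \<Rightarrow> (let mk = card {j. 1 \<le> j \<and> j < k \<and> suff_desc T \<alpha> x \<mu> j}
                 in (res T (x (Suc k)) + real mk * \<mu> k) / (real mk + 1))
        | EMA \<theta> \<Rightarrow> \<theta> * res T (x (Suc k)) + (1 - \<theta>) * \<mu> k
        | RM m \<Rightarrow> Max ((\<lambda>j. res T (x (Suc j))) ` recent m (desc_set T \<alpha> x \<mu> k)))
     else \<mu> k)"

text \<open>The sequences x, y, mu (indexed from 1) are generated by the Safe-L2O method with
  learned maps L k, fallback operator T, parameter alpha and safeguard scheme s.\<close>
definition safe_l2o :: "('a::real_normed_vector \<Rightarrow> 'a) \<Rightarrow> (nat \<Rightarrow> 'a \<Rightarrow> 'a) \<Rightarrow> real \<Rightarrow> scheme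
    \<Rightarrow> (nat \<Rightarrow> 'a) \<Rightarrow> (nat \<Rightarrow> 'a) \<Rightarrow> (nat \<Rightarrow> real) \<Rightarrow> bool" where
  "safe_l2o T L \<alpha> s x y \<mu> \<longleftrightarrow>
     \<mu> 1 = res T (x 1) \<and>
     (\<forall>k\<ge>1. y k = L k (x k) \<and>
             x (Suc k) = (if res T (y k) \<le> \<alpha> * \<mu> k then y k else T (x k)) \<and>
             \<mu> (Suc k) = next_mu s T \<alpha> x \<mu> k)"

end

theory Submission imports Defs begin

lemma res_nonneg: "0 \<le> res T v" by (simp add: res_def)

lemma recent_insert:
  assumes "finite S" shows "recent m (insert k S) \<subseteq> insert k (recent m S)"
proof
  fix j assume j: "j \<in> recent m (insert k S)"
  show "j \<in> insert k (recent m S)"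
  proof (cases "j = k")
    case False
    then have "j \<in> S" using j by (auto simp: recent_def)
    moreover have "card {i \<in> S. j \<le> i} \<le> card {i \<in> insert k S. j \<le> i}"
      by (rule card_mono) (use assms in auto)
    ultimately show ?thesis using j by (auto simp: recent_def)
  qed simp
qed

lemma recent_nonempty:
  assumes "finite S" "S \<noteq> {}" "1 \<le> m" shows "Max S \<in> recent m S"
proof -
  have mi: "Max S \<in> S" using Max_in[OF assms(1,2)] .
  have "{i \<in> S. Max S \<le> i} = {Max S}"
  proof (rule set_eqI, rule iffI)
    fix i assume "i \<in> {i \<in> S. Max S \<le> i}"
    then show "i \<in> {Max S}" using Max_ge[OF assms(1), of i] by simp
  qed (use mi in simp)
  then show ?thesis using assms by (auto simp: recent_def)
qed

lemma desc_set_finite: "finite (desc_set T \<alpha> x \<mu> k)"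
  by (rule finite_subset[of _ "{..k}"]) (auto simp: desc_set_def)

lemma desc_set_step: "1 \<le> k \<Longrightarrow> desc_set T \<alpha> x \<mu> k =
   (if suff_desc T \<alpha> x \<mu> k then insert k (desc_set T \<alpha> x \<mu> (k-1)) else desc_set T \<alpha> x \<mu> (k-1))"
proof -
  assume k: "1 \<le> k"
  have e: "\<And>j. j \<le> k \<longleftrightarrow> j \<le> k - 1 \<or> j = k" using k by auto
  show ?thesis unfolding desc_set_def using k by (auto simp: e)
qed

locale safe =
  fixes T :: "'a::real_normed_vector \<Rightarrow> 'a" and L :: "nat \<Rightarrow> 'a \<Rightarrow> 'a" and \<alpha> :: real and s :: scheme
    and x y :: "nat \<Rightarrow> 'a" and \<mu> :: "nat \<Rightarrow> real"
  assumes avg: "averaged T" and a0: "0 < \<alpha>" and a1: "\<alpha> < 1" and vs: "valid_scheme s"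
    and sl: "safe_l2o T L \<alpha> s x y \<mu>"
    and inf: "\<forall>N. \<exists>k\<ge>N. 1 \<le> k \<and> suff_desc T \<alpha> x \<mu> k"
begin

lemma nonexp: "norm (T u - T v) \<le> norm (u - v)"
proof -
  obtain lam Q where l: "0 < lam" "lam < 1" and Q: "\<forall>u v. norm (Q u - Q v) \<le> norm (u - v)"
    and TQ: "\<forall>u. T u = (1 - lam) *\<^sub>R u + lam *\<^sub>R Q u"
    using avg unfolding averaged_def by blast
  have "T u - T v = (1-lam) *\<^sub>R (u-v) + lam *\<^sub>R (Q u - Q v)"
    by (simp only: TQ[rule_format]) (simp add: algebra_simps)
  then have "norm (T u - T v) \<le> norm ((1-lam) *\<^sub>R (u-v)) + norm (lam *\<^sub>R (Q u - Q v))"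
    by (metis norm_triangle_ineq)
  also have "\<dots> = (1-lam) * norm (u-v) + lam * norm (Q u - Q v)" using l by simp
  also have "\<dots> \<le> (1-lam) * norm (u-v) + lam * norm (u - v)"
    using Q l by (simp add: mult_left_mono)
  finally show ?thesis by (simp add: algebra_simps)
qed

lemma res_T: "res T (T z) \<le> res T z"
  unfolding res_def using nonexp[of z "T z"] by simp

lemma xstep: "1 \<le> k \<Longrightarrow> x (Suc k) = (if res T (y k) \<le> \<alpha> * \<mu> k then y k else T (x k))"
  using sl unfolding safe_l2o_def by blast
lemma mustep: "1 \<le> k \<Longrightarrow> \<mu> (Suc k) = next_mu s T \<alpha> x \<mu> k"
  using sl unfolding safe_l2o_def by blast
lemma mu1: "\<mu> 1 = res T (x 1)"
  using sl unfolding safe_l2o_def by blast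

lemma step_cases: "1 \<le> k \<Longrightarrow> suff_desc T \<alpha> x \<mu> k \<or> x (Suc k) = T (x k)"
  using xstep[of k] by (auto simp: suff_desc_def split: if_splits)

lemma res_step: "1 \<le> k \<Longrightarrow> res T (x (Suc k)) \<le> max (\<alpha> * \<mu> k) (res T (x k))"
  using step_cases[of k] res_T[of "x k"] by (auto simp: suff_desc_def)

lemma mu_noD: "1 \<le> k \<Longrightarrow> \<not> suff_desc T \<alpha> x \<mu> k \<Longrightarrow> \<mu> (Suc k) = \<mu> k"
  by (simp add: mustep next_mu_def)

lemma mu_nonneg: "1 \<le> k \<Longrightarrow> 0 \<le> \<mu> k"
proof (induction k rule: dec_induct)
  case base then show ?case by (metis One_nat_def mu1 res_nonneg)
next
  case (step k)
  show ?case
  proof (cases "suff_desc T \<alpha> x \<mu> k")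
    case False then show ?thesis using step mu_noD by simp
  next
    case True
    show ?thesis
    proof (cases s)
      case (GS \<theta>) then show ?thesis using True step vs
        by (simp add: mustep next_mu_def valid_scheme_def)
    next
      case RT then show ?thesis using True step by (simp add: mustep next_mu_def res_nonneg)
    next
      case AA then show ?thesis using True step res_nonneg[of T "x (Suc k)"]
        by (simp add: mustep next_mu_def Let_def)
    next
      case (EMA \<theta>) then show ?thesis using True step vs res_nonneg[of T "x (Suc k)"]
        by (simp add: mustep next_mu_def valid_scheme_def)
    next
      case (RM m)
      let ?S = "recent m (desc_set T \<alpha> x \<mu> k)"
      have "k \<in> desc_set T \<alpha> x \<mu> k" using True step by (simp add: desc_set_def)
      then have ne: "Max (desc_set T \<alpha> x \<mu> k) \<in> ?S"
        by (intro recent_nonempty desc_set_finite) (use vs RM in \<open>auto simp: valid_scheme_def\<close>)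
      have fin: "finite ?S" by (rule finite_subset[OF _ desc_set_finite]) (auto simp: recent_def)
      have "res T (x (Suc (Max (desc_set T \<alpha> x \<mu> k)))) \<le> Max ((\<lambda>j. res T (x (Suc j))) ` ?S)"
        using fin ne by (intro Max_ge) auto
      then show ?thesis using RM True step res_nonneg[of T]
        by (simp add: mustep next_mu_def) (meson order_trans res_nonneg)
    qed
  qed
qed

lemma RM_inv: assumes RM: "s = RM m" and k1: "1 \<le> k" shows "
   \<forall>j\<in>recent m (desc_set T \<alpha> x \<mu> (k-1)). res T (x (Suc j)) \<le> \<mu> k"
  using k1 proof (induction k rule: dec_induct)
  case base then show ?case by (simp add: desc_set_def recent_def)
next
  case (step k)
  show ?case
  proof (cases "suff_desc T \<alpha> x \<mu> k")
    case False
    then show ?thesis using step mu_noD[of k] desc_set_step[of k T \<alpha> x \<mu>] by simp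
  next
    case True
    let ?S = "recent m (desc_set T \<alpha> x \<mu> k)"
    have fin: "finite ?S" by (rule finite_subset[OF _ desc_set_finite]) (auto simp: recent_def)
    have "\<forall>j\<in>?S. res T (x (Suc j)) \<le> Max ((\<lambda>j. res T (x (Suc j))) ` ?S)"
    proof
      fix j assume "j \<in> ?S"
      then show "res T (x (Suc j)) \<le> Max ((\<lambda>j. res T (x (Suc j))) ` ?S)"
        by (intro Max_ge) (use fin in auto)
    qed
    moreover have "\<mu> (Suc k) = Max ((\<lambda>j. res T (x (Suc j))) ` ?S)"
      using True step RM by (simp add: mustep next_mu_def)
    ultimately show ?thesis by simp
  qed
qed

lemma mu_mono: "1 \<le> k \<Longrightarrow> \<mu> (Suc k) \<le> \<mu> k"
proof -
  assume k: "1 \<le> k"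
  show ?thesis
  proof (cases "suff_desc T \<alpha> x \<mu> k")
    case False then show ?thesis using mu_noD k by simp
  next
    case True
    have r: "res T (x (Suc k)) \<le> \<alpha> * \<mu> k" using True by (simp add: suff_desc_def)
    have m0: "0 \<le> \<mu> k" using mu_nonneg k by simp
    have "\<alpha> * \<mu> k \<le> \<mu> k" using mult_left_le_one_le[of "\<mu> k" \<alpha>] m0 a0 a1 by simp
    then have r2: "res T (x (Suc k)) \<le> \<mu> k" using r by linarith
    show ?thesis
    proof (cases s)
      case (GS \<theta>) then show ?thesis using True k vs m0
        by (simp add: mustep next_mu_def valid_scheme_def mult_left_le_one_le)
    next
      case RT then show ?thesis using True k r2 by (simp add: mustep next_mu_def)
    next
      case AA
      define c where "c = card {j. 1 \<le> j \<and> j < k \<and> suff_desc T \<alpha> x \<mu> j}"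
      have "(res T (x (Suc k)) + real c * \<mu> k) / (real c + 1) \<le> \<mu> k"
        using r2 by (simp add: divide_le_eq algebra_simps)
      then show ?thesis using AA True k by (simp add: mustep next_mu_def Let_def c_def)
    next
      case (EMA \<theta>)
      have "\<theta> * res T (x (Suc k)) + (1 - \<theta>) * \<mu> k \<le> \<theta> * \<mu> k + (1 - \<theta>) * \<mu> k"
        using r2 vs EMA by (simp add: valid_scheme_def)
      then show ?thesis using EMA True k by (simp add: mustep next_mu_def algebra_simps)
    next
      case (RM m)
      let ?S = "recent m (desc_set T \<alpha> x \<mu> k)"
      have "k \<in> desc_set T \<alpha> x \<mu> k" using True k by (simp add: desc_set_def)
      then have ne: "Max (desc_set T \<alpha> x \<mu> k) \<in> ?S"
        by (intro recent_nonempty desc_set_finite) (use vs RM in \<open>auto simp: valid_scheme_def\<close>)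
      have fin: "finite ?S" by (rule finite_subset[OF _ desc_set_finite]) (auto simp: recent_def)
      have sub: "?S \<subseteq> insert k (recent m (desc_set T \<alpha> x \<mu> (k-1)))"
        using desc_set_step[of k T \<alpha> x \<mu>] True k recent_insert[OF desc_set_finite] by simp
      have "\<forall>j\<in>?S. res T (x (Suc j)) \<le> \<mu> k"
        using sub RM_inv[OF RM k] r2 by auto
      then have "Max ((\<lambda>j. res T (x (Suc j))) ` ?S) \<le> \<mu> k"
        using fin ne by (subst Max_le_iff) auto
      then show ?thesis using RM True k by (simp add: mustep next_mu_def)
    qed
  qed
qed

lemma mu_anti: assumes "1 \<le> i" "i \<le> j" shows "\<mu> j \<le> \<mu> i"
  using assms(2) proof (induction j rule: dec_induct)
  case (step j) then show ?case using mu_mono[of j] assms(1) by simp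
qed simp

lemma infset: "infinite {j. K \<le> j \<and> suff_desc T \<alpha> x \<mu> j}"
  unfolding infinite_nat_iff_unbounded_le
proof
  fix mm
  obtain k where "max mm K \<le> k" "suff_desc T \<alpha> x \<mu> k" using inf by blast
  then show "\<exists>n\<ge>mm. n \<in> {j. K \<le> j \<and> suff_desc T \<alpha> x \<mu> j}" by auto
qed

lemma mu_lim: "\<mu> \<longlonglongrightarrow> 0"
proof -
  let ?\<nu> = "\<lambda>k. \<mu> (Suc k)"
  have dec: "decseq ?\<nu>" unfolding decseq_Suc_iff using mu_mono by simp
  have nn: "\<forall>i. 0 \<le> ?\<nu> i" using mu_nonneg by simp
  obtain Lm where lim: "?\<nu> \<longlonglongrightarrow> Lm" and lb: "\<forall>i. Lm \<le> ?\<nu> i"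
    using decseq_convergent[OF dec nn] by blast
  have limmu: "\<mu> \<longlonglongrightarrow> Lm" using lim filterlim_sequentially_Suc by blast
  have Lmu: "\<And>k. 1 \<le> k \<Longrightarrow> Lm \<le> \<mu> k"
  proof -
    fix k :: nat assume "1 \<le> k"
    then have "Suc (k - 1) = k" by simp
    then show "Lm \<le> \<mu> k" using lb[rule_format, of "k - 1"] by simp
  qed
  have L0: "0 \<le> Lm" using LIMSEQ_le_const[OF lim] nn by blast
  have key: "Lm = 0" if c1: "c < 1" and H: "\<And>K. 1 \<le> K \<Longrightarrow> Lm \<le> c * \<mu> K" for c
  proof -
    have "(\<lambda>K. c * \<mu> K) \<longlonglongrightarrow> c * Lm" by (intro tendsto_intros limmu)
    then have "Lm \<le> c * Lm" using H by (intro LIMSEQ_le_const) auto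
    then have "(1 - c) * Lm \<le> 0" by (simp add: algebra_simps)
    then show ?thesis using c1 L0 by (simp add: mult_le_0_iff)
  qed
  have "Lm = 0"
  proof (cases s)
    case (GS \<theta>)
    have th: "0 < \<theta>" "\<theta> < 1" using vs GS by (auto simp: valid_scheme_def)
    show ?thesis
    proof (rule key[OF th(2)])
      fix K :: nat assume K: "1 \<le> K"
      obtain k where k: "K \<le> k" "suff_desc T \<alpha> x \<mu> k" using inf by blast
      have "Lm \<le> \<mu> (Suc k)" using Lmu by simp
      also have "\<dots> = \<theta> * \<mu> k" using GS k K by (simp add: mustep next_mu_def)
      also have "\<dots> \<le> \<theta> * \<mu> K" using mu_anti[OF K k(1)] th by simp
      finally show "Lm \<le> \<theta> * \<mu> K" .
    qed
  next
    case RT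
    show ?thesis
    proof (rule key[OF a1])
      fix K :: nat assume K: "1 \<le> K"
      obtain k where k: "K \<le> k" "suff_desc T \<alpha> x \<mu> k" using inf by blast
      have "Lm \<le> \<mu> (Suc k)" using Lmu by simp
      also have "\<dots> = res T (x (Suc k))" using RT k K by (simp add: mustep next_mu_def)
      also have "\<dots> \<le> \<alpha> * \<mu> k" using k by (simp add: suff_desc_def)
      also have "\<dots> \<le> \<alpha> * \<mu> K" using mu_anti[OF K k(1)] a0 by simp
      finally show "Lm \<le> \<alpha> * \<mu> K" .
    qed
  next
    case (EMA \<theta>)
    have th: "0 < \<theta>" "\<theta> < 1" using vs EMA by (auto simp: valid_scheme_def)
    have c1: "1 - \<theta> * (1 - \<alpha>) < 1" using th a1 by simp
    have "\<theta> * (1 - \<alpha>) \<le> 1" using th a0 a1 by (intro mult_le_one) auto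
    then have c0: "0 \<le> 1 - \<theta> * (1 - \<alpha>)" by simp
    show ?thesis
    proof (rule key[OF c1])
      fix K :: nat assume K: "1 \<le> K"
      obtain k where k: "K \<le> k" "suff_desc T \<alpha> x \<mu> k" using inf by blast
      have "Lm \<le> \<mu> (Suc k)" using Lmu by simp
      also have "\<dots> = \<theta> * res T (x (Suc k)) + (1 - \<theta>) * \<mu> k"
        using EMA k K by (simp add: mustep next_mu_def)
      also have "\<dots> \<le> \<theta> * (\<alpha> * \<mu> k) + (1 - \<theta>) * \<mu> k"
        using k th by (simp add: suff_desc_def)
      also have "\<dots> = (1 - \<theta> * (1 - \<alpha>)) * \<mu> k" by (simp add: algebra_simps)
      also have "\<dots> \<le> (1 - \<theta> * (1 - \<alpha>)) * \<mu> K" using mu_anti[OF K k(1)] c0 by (rule mult_left_mono)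
      finally show "Lm \<le> (1 - \<theta> * (1 - \<alpha>)) * \<mu> K" .
    qed
  next
    case (RM m)
    have m1: "1 \<le> m" using vs RM by (simp add: valid_scheme_def)
    show ?thesis
    proof (rule key[OF a1])
      fix K :: nat assume K: "1 \<le> K"
      obtain B where B: "finite B" "card B = m" "B \<subseteq> {j. K \<le> j \<and> suff_desc T \<alpha> x \<mu> j}"
        using infinite_arbitrarily_large[OF infset] by blast
      have Bne: "B \<noteq> {}" using B m1 by auto
      define k where "k = Max B"
      have kB: "k \<in> B" using B Bne by (simp add: k_def)
      have k: "K \<le> k" "suff_desc T \<alpha> x \<mu> k" using kB B by auto
      have k1: "1 \<le> k" using K k by simp
      let ?D = "desc_set T \<alpha> x \<mu> k"
      let ?S = "recent m ?D"
      have Bsub: "B \<subseteq> ?D"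
      proof
        fix b assume "b \<in> B"
        then show "b \<in> ?D" using B K Max_ge[OF B(1), of b] by (auto simp: desc_set_def k_def)
      qed
      have geK: "K \<le> j" if j: "j \<in> ?S" for j
      proof (rule ccontr)
        assume "\<not> K \<le> j"
        then have jB: "j \<notin> B" and jlt: "\<forall>b\<in>B. j \<le> b" using B by auto
        have jD: "j \<in> ?D" using j by (simp add: recent_def)
        have "insert j B \<subseteq> {i \<in> ?D. j \<le> i}" using jD Bsub jlt by auto
        then have "card (insert j B) \<le> card {i \<in> ?D. j \<le> i}"
          by (intro card_mono) (use desc_set_finite[of T \<alpha> x \<mu> k] in auto)
        moreover have "card (insert j B) = m + 1" using B jB by simp
        moreover have "card {i \<in> ?D. j \<le> i} \<le> m" using j by (simp add: recent_def)
        ultimately show False by simp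
      qed
      have "k \<in> ?D" using k k1 by (simp add: desc_set_def)
      then have ne: "Max ?D \<in> ?S"
        by (intro recent_nonempty desc_set_finite m1) auto
      have fin: "finite ?S" by (rule finite_subset[OF _ desc_set_finite]) (auto simp: recent_def)
      have each: "res T (x (Suc j)) \<le> \<alpha> * \<mu> K" if j: "j \<in> ?S" for j
      proof -
        have "suff_desc T \<alpha> x \<mu> j" using j by (simp add: recent_def desc_set_def)
        then have "res T (x (Suc j)) \<le> \<alpha> * \<mu> j" by (simp add: suff_desc_def)
        also have "\<dots> \<le> \<alpha> * \<mu> K" using mu_anti[OF K geK[OF j]] a0 by simp
        finally show ?thesis .
      qed
      have "Lm \<le> \<mu> (Suc k)" using Lmu by simp
      also have "\<dots> = Max ((\<lambda>j. res T (x (Suc j))) ` ?S)"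
        using RM k k1 by (simp add: mustep next_mu_def)
      also have "\<dots> \<le> \<alpha> * \<mu> K"
        using fin ne each by (subst Max_le_iff) auto
      finally show "Lm \<le> \<alpha> * \<mu> K" .
    qed
  next
    case AA
    show ?thesis
    proof (rule ccontr)
      assume "Lm \<noteq> 0"
      then have Lp: "0 < Lm" using L0 by simp
      define mc where "mc k = card {j. 1 \<le> j \<and> j < k \<and> suff_desc T \<alpha> x \<mu> j}" for k
      have inv: "\<mu> k + (1 - \<alpha>) * Lm * harm (mc k) \<le> \<mu> 1" if k1: "1 \<le> k" for k
        using k1
      proof (induction k rule: dec_induct)
        case base
        have "mc 1 = 0" by (simp add: mc_def)
        then show ?case by (simp add: harm_def)
      next
        case (step k)
        show ?case
        proof (cases "suff_desc T \<alpha> x \<mu> k")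
          case False
          have "{j. 1 \<le> j \<and> j < Suc k \<and> suff_desc T \<alpha> x \<mu> j} = {j. 1 \<le> j \<and> j < k \<and> suff_desc T \<alpha> x \<mu> j}"
            using False by (auto simp: less_Suc_eq)
          then have "mc (Suc k) = mc k" by (simp add: mc_def)
          then show ?thesis using step False mu_noD by simp
        next
          case True
          have seteq: "{j. 1 \<le> j \<and> j < Suc k \<and> suff_desc T \<alpha> x \<mu> j} = insert k {j. 1 \<le> j \<and> j < k \<and> suff_desc T \<alpha> x \<mu> j}"
            using True step by (auto simp: less_Suc_eq)
          have "finite {j. 1 \<le> j \<and> j < k \<and> suff_desc T \<alpha> x \<mu> j}" by (rule finite_subset[of _ "{..<k}"]) auto
          then have mcS: "mc (Suc k) = mc k + 1" unfolding mc_def seteq by simp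
          have r: "res T (x (Suc k)) \<le> \<alpha> * \<mu> k" using True by (simp add: suff_desc_def)
          have Lk: "Lm \<le> \<mu> k" using Lmu step by simp
          define c where "c = real (mc k)"
          have c0: "0 \<le> c" by (simp add: c_def)
          have mu: "\<mu> (Suc k) = (res T (x (Suc k)) + c * \<mu> k) / (c + 1)"
            using AA True step by (simp add: mustep next_mu_def Let_def c_def mc_def)
          have "(1 - \<alpha>) * Lm \<le> (1 - \<alpha>) * \<mu> k" using Lk a1 by simp
          then have "res T (x (Suc k)) + c * \<mu> k \<le> (c + 1) * \<mu> k - (1 - \<alpha>) * Lm"
            using r by (simp add: algebra_simps)
          then have "(res T (x (Suc k)) + c * \<mu> k) / (c + 1) \<le> ((c + 1) * \<mu> k - (1 - \<alpha>) * Lm) / (c + 1)"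
            using c0 by (intro divide_right_mono) auto
          also have "\<dots> = \<mu> k - (1 - \<alpha>) * Lm / (c + 1)" using c0 by (simp add: field_simps)
          finally have "\<mu> (Suc k) \<le> \<mu> k - (1 - \<alpha>) * Lm / (c + 1)" unfolding mu .
          moreover have "harm (mc (Suc k)) = harm (mc k) + 1 / (c + 1)"
            by (simp add: mcS harm_Suc c_def inverse_eq_divide add.commute)
          ultimately show ?thesis using step.IH by (simp add: algebra_simps)
        qed
      qed
      have unb: "\<exists>k\<ge>1. M \<le> mc k" for M
      proof -
        have "infinite {j. 1 \<le> j \<and> suff_desc T \<alpha> x \<mu> j}" using infset[of 1] by simp
        then obtain B where B: "finite B" "card B = M" "B \<subseteq> {j. 1 \<le> j \<and> suff_desc T \<alpha> x \<mu> j}"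
          using infinite_arbitrarily_large by blast
        show ?thesis
        proof (cases "B = {}")
          case True then show ?thesis using B by auto
        next
          case False
          define k where "k = Suc (Max B)"
          have "B \<subseteq> {j. 1 \<le> j \<and> j < k \<and> suff_desc T \<alpha> x \<mu> j}"
            using B Max_ge[OF B(1)] by (auto simp: k_def less_Suc_eq_le)
          then have "card B \<le> mc k" unfolding mc_def
            by (intro card_mono) (auto intro: finite_subset[of _ "{..<k}"])
          then have "M \<le> mc k" using B by simp
          then show ?thesis by (auto simp: k_def)
        qed
      qed
      define bnd where "bnd = \<mu> 1 / ((1 - \<alpha>) * Lm) + 1"
      have cpos: "0 < (1 - \<alpha>) * Lm" using a1 Lp by simp
      have "eventually (\<lambda>n. bnd \<le> harm n) sequentially"
        using harm_at_top unfolding filterlim_at_top by blast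
      then obtain N where N: "\<And>n. N \<le> n \<Longrightarrow> bnd \<le> (harm n :: real)"
        unfolding eventually_sequentially by blast
      obtain k where k: "1 \<le> k" "N \<le> mc k" using unb by blast
      have "(1 - \<alpha>) * Lm * harm (mc k) \<le> \<mu> 1" using inv[OF k(1)] mu_nonneg[OF k(1)] by simp
      then have "harm (mc k) \<le> \<mu> 1 / ((1 - \<alpha>) * Lm)" using cpos
        by (simp add: le_divide_eq mult.commute)
      then show False using N[OF k(2)] by (simp add: bnd_def)
    qed
  qed
  then show ?thesis using limmu by simp
qed

lemma res_lim: "(\<lambda>k. res T (x k)) \<longlonglongrightarrow> 0"
proof (rule LIMSEQ_I)
  fix e :: real assume e: "0 < e"
  obtain K where K: "\<forall>k\<ge>K. norm (\<mu> k - 0) < e" using LIMSEQ_D[OF mu_lim e] by blast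
  obtain d where d: "max K 1 \<le> d" "suff_desc T \<alpha> x \<mu> d" using inf by blast
  have lt: "res T (x k) < e" if "Suc d \<le> k" for k
    using that
  proof (induction k rule: dec_induct)
    case base
    have "res T (x (Suc d)) \<le> \<alpha> * \<mu> d" using d by (simp add: suff_desc_def)
    also have "\<dots> \<le> \<mu> d" using mult_left_le_one_le[of "\<mu> d" \<alpha>] mu_nonneg[of d] d a0 a1 by simp
    also have "\<dots> < e" using K d by auto
    finally show ?case .
  next
    case (step k)
    have k1: "1 \<le> k" "K \<le> k" using step d by auto
    have "\<alpha> * \<mu> k \<le> \<mu> k" using mult_left_le_one_le[of "\<mu> k" \<alpha>] mu_nonneg[of k] k1 a0 a1 by simp
    moreover have "\<mu> k < e" using K k1 by auto
    ultimately show ?case using res_step[OF k1(1)] step.IH by simp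
  qed
  show "\<exists>no. \<forall>n\<ge>no. norm (res T (x n) - 0) < e"
    using lt res_nonneg[of T] by auto
qed

end

theorem corollary1:
  fixes T :: "real^'n \<Rightarrow> real^'n"
    and L :: "nat \<Rightarrow> real^'n \<Rightarrow> real^'n"
    and \<alpha> :: real and s :: scheme
    and x y :: "nat \<Rightarrow> real^'n" and \<mu> :: "nat \<Rightarrow> real"
  assumes "averaged T"
    and "Fix T \<noteq> {}"
    and "filterlim (\<lambda>z. norm (z - T z)) at_top at_infinity"
    and "0 < \<alpha>" and "\<alpha> < 1"
    and "valid_scheme s"
    and "safe_l2o T L \<alpha> s x y \<mu>"
    and "\<exists>\<^sub>F k in sequentially. norm (y k - T (y k)) \<le> \<alpha> * \<mu> k"
  shows "\<mu> \<longlonglongrightarrow> 0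
    \<and> (\<lambda>k. infdist (x k) (Fix T)) \<longlonglongrightarrow> 0
    \<and> ((\<exists>!p. \<exists>r::nat \<Rightarrow> nat. strict_mono r \<and> (x \<circ> r) \<longlonglongrightarrow> p)
         \<longrightarrow> (\<exists>p\<in>Fix T. x \<longlonglongrightarrow> p))"
proof -
  have inf: "\<forall>N. \<exists>k\<ge>N. 1 \<le> k \<and> suff_desc T \<alpha> x \<mu> k"
  proof
    fix N
    obtain k where k: "max N 1 \<le> k" "norm (y k - T (y k)) \<le> \<alpha> * \<mu> k"
      using assms(8) unfolding frequently_sequentially by blast
    have "x (Suc k) = y k" using assms(7) k unfolding safe_l2o_def res_def by auto
    then have "suff_desc T \<alpha> x \<mu> k" using k by (simp add: suff_desc_def res_def)
    then show "\<exists>k\<ge>N. 1 \<le> k \<and> suff_desc T \<alpha> x \<mu> k" using k by auto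
  qed
  interpret S: safe T L \<alpha> s x y \<mu>
    by unfold_locales (use assms inf in auto)
  have mu: "\<mu> \<longlonglongrightarrow> 0" by (rule S.mu_lim)
  have rl: "(\<lambda>k. res T (x k)) \<longlonglongrightarrow> 0" by (rule S.res_lim)
  have "1-lipschitz_on UNIV T"
    by (rule lipschitz_onI) (use S.nonexp in \<open>auto simp: dist_norm\<close>)
  then have contT: "continuous_on UNIV T" by (rule lipschitz_on_continuous_on)
  have contR: "continuous_on UNIV (\<lambda>z. z - T z)" by (intro continuous_intros contT)
  obtain R where R: "\<And>k. norm (x k) \<le> R"
  proof -
    have "eventually (\<lambda>z. 1 \<le> norm (z - T z)) at_infinity"
      using assms(3) unfolding filterlim_at_top by blast
    then obtain b where b: "\<And>z. b \<le> norm z \<Longrightarrow> 1 \<le> norm (z - T z)"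
      unfolding eventually_at_infinity by blast
    obtain N where N: "\<forall>n\<ge>N. norm (res T (x n) - 0) < 1" using LIMSEQ_D[OF rl, of 1] by auto
    have "norm (x k) \<le> max b 0 + (\<Sum>i<N. norm (x i))" for k
    proof (cases "k < N")
      case True
      then have "norm (x k) \<le> (\<Sum>i<N. norm (x i))" by (intro member_le_sum) auto
      moreover have "0 \<le> max b 0" by simp
      ultimately show ?thesis by linarith
    next
      case False
      then have "N \<le> k" by simp
      then have "res T (x k) < 1" using N res_nonneg[of T "x k"] by auto
      then have "norm (x k) < b" using b[of "x k"] by (force simp: res_def)
      moreover have "0 \<le> (\<Sum>i<N. norm (x i))" by (intro sum_nonneg) auto
      ultimately show ?thesis by linarith
    qed
    then show ?thesis using that by blast
  qed
  have clus: "\<exists>q rr. strict_mono rr \<and> (\<forall>n. rr n \<in> Sx) \<and> (x \<circ> rr) \<longlonglongrightarrow> q"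
    if Sx: "infinite Sx" for Sx
  proof -
    let ?g = "x \<circ> enumerate Sx"
    have "\<forall>n. ?g n \<in> cball 0 R" using R by (simp add: dist_norm)
    then obtain l r' where r': "strict_mono (r' :: nat \<Rightarrow> nat)" "(?g \<circ> r') \<longlonglongrightarrow> l"
      using seq_compactE[OF compact_imp_seq_compact[OF compact_cball]] by metis
    have "strict_mono (enumerate Sx \<circ> r')" by (intro strict_mono_o strict_mono_enumerate Sx r')
    moreover have "\<forall>n. (enumerate Sx \<circ> r') n \<in> Sx" using enumerate_in_set[OF Sx] by simp
    moreover have "(x \<circ> (enumerate Sx \<circ> r')) \<longlonglongrightarrow> l" using r'(2) by (simp add: o_assoc)
    ultimately show ?thesis by blast
  qed
  have cfix: "q \<in> Fix T" if rr: "strict_mono rr" "(x \<circ> rr) \<longlonglongrightarrow> q" for rr q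
  proof -
    have "isCont (\<lambda>z. z - T z) q" using contR by (simp add: continuous_on_eq_continuous_at)
    from isCont_tendsto_compose[OF this rr(2)]
    have "(\<lambda>n. norm ((x \<circ> rr) n - T ((x \<circ> rr) n))) \<longlonglongrightarrow> norm (q - T q)"
      by (intro tendsto_norm)
    moreover have "(\<lambda>n. norm ((x \<circ> rr) n - T ((x \<circ> rr) n))) \<longlonglongrightarrow> 0"
      using LIMSEQ_subseq_LIMSEQ[OF rl rr(1)] by (simp add: res_def o_def)
    ultimately have "norm (q - T q) = 0" using LIMSEQ_unique by blast
    then show ?thesis by (simp add: Fix_def)
  qed
  have dist: "(\<lambda>k. infdist (x k) (Fix T)) \<longlonglongrightarrow> 0"
  proof (rule LIMSEQ_I)
    fix e :: real assume e: "0 < e"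
    let ?Sx = "{k. e \<le> infdist (x k) (Fix T)}"
    have "finite ?Sx"
    proof (rule ccontr)
      assume "infinite ?Sx"
      then obtain q rr where rr: "strict_mono rr" "\<forall>n. rr n \<in> ?Sx" "(x \<circ> rr) \<longlonglongrightarrow> q"
        using clus by blast
      have "q \<in> Fix T" using cfix rr by blast
      have "(\<lambda>n. infdist ((x \<circ> rr) n) (Fix T)) \<longlonglongrightarrow> infdist q (Fix T)"
        by (intro tendsto_infdist rr(3))
      then have "e \<le> infdist q (Fix T)" using rr(2) by (intro LIMSEQ_le_const) auto
      then show False using \<open>q \<in> Fix T\<close> e by simp
    qed
    then obtain m where m: "\<forall>n\<in>?Sx. n \<le> m" unfolding finite_nat_set_iff_bounded_le by blast
    show "\<exists>no. \<forall>n\<ge>no. norm (infdist (x n) (Fix T) - 0) < e"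
    proof (rule exI[of _ "Suc m"], intro allI impI)
      fix n assume "Suc m \<le> n"
      then have "\<not> e \<le> infdist (x n) (Fix T)" using m by fastforce
      then show "norm (infdist (x n) (Fix T) - 0) < e" using infdist_nonneg[of "x n" "Fix T"] by simp
    qed
  qed
  have conv: "\<exists>p\<in>Fix T. x \<longlonglongrightarrow> p" if U: "\<exists>!p. \<exists>r::nat \<Rightarrow> nat. strict_mono r \<and> (x \<circ> r) \<longlonglongrightarrow> p"
  proof -
    obtain p r0 where p: "strict_mono r0" "(x \<circ> r0) \<longlonglongrightarrow> p"
      and uniq: "\<And>q r. strict_mono r \<Longrightarrow> (x \<circ> r) \<longlonglongrightarrow> q \<Longrightarrow> q = p"
      using U by metis
    have pF: "p \<in> Fix T" using cfix p by blast
    have "x \<longlonglongrightarrow> p"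
    proof (rule LIMSEQ_I)
      fix e :: real assume e: "0 < e"
      let ?Sx = "{k. e \<le> norm (x k - p)}"
      have "finite ?Sx"
      proof (rule ccontr)
        assume "infinite ?Sx"
        then obtain q rr where rr: "strict_mono rr" "\<forall>n. rr n \<in> ?Sx" "(x \<circ> rr) \<longlonglongrightarrow> q"
          using clus by blast
        have "q = p" using uniq rr by blast
        have "(\<lambda>n. norm ((x \<circ> rr) n - p)) \<longlonglongrightarrow> norm (q - p)"
          by (intro tendsto_intros rr(3))
        then have "e \<le> norm (q - p)" using rr(2) by (intro LIMSEQ_le_const) auto
        then show False using \<open>q = p\<close> e by simp
      qed
      then obtain m where m: "\<forall>n\<in>?Sx. n \<le> m" unfolding finite_nat_set_iff_bounded_le by blast
      show "\<exists>no. \<forall>n\<ge>no. norm (x n - p) < e"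
      proof (rule exI[of _ "Suc m"], intro allI impI)
        fix n assume "Suc m \<le> n"
        then have "\<not> e \<le> norm (x n - p)" using m by fastforce
        then show "norm (x n - p) < e" by simp
      qed
    qed
    then show ?thesis using pF by blast
  qed
  show ?thesis using mu dist conv by blast
qed

end
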